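(* Let $A$ be a commutative unital Banach algebra with unit $1_A$, let $x,y\in A$ be quasinilpotent, and let $\lambda\in\mathbb{C}$. (i) If $\lambda\notin\pi\mathbb{Z}$ and $\cos(\lambda 1_A+x)=\cos(\lambda 1_A+y)$, then $x=y$. (ii) If $\lambda\in\pi\mathbb{Z}$ and $\cos(\lambda 1_A+x)=\cos(\lambda 1_A+y)$, then $x^2=y^2$.
   Context: For $z\in A$, $\cos(z)=\sum_{n=0}^\infty(-1)^n\frac{z^{2n}}{(2n)!}$. An element $x$ is quasinilpotent if $\lim_{n\to\infty}\Vert x^n\Vert^{1/n}=0$. *)

theory Defs
  imports "HOL-Analysis.Analysis"
begin

text \<open>The distribution
  has no complex-vector-space type class, so we extend the real commutative unital
  Banach algebra classes by a complex scalar multiplication compatible with the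
  real one and with the norm and multiplication.\<close>

class comm_cbanach_algebra_1 = banach + real_normed_algebra_1 + comm_ring_1 +
  fixes scaleC :: "complex \<Rightarrow> 'a \<Rightarrow> 'a"
  assumes scaleC_of_real: "scaleC (complex_of_real r) x = scaleR r x"
    and scaleC_add_right: "scaleC a (x + y) = scaleC a x + scaleC a y"
    and scaleC_add_left: "scaleC (a + b) x = scaleC a x + scaleC b x"
    and scaleC_scaleC: "scaleC a (scaleC b x) = scaleC (a * b) x"
    and scaleC_one: "scaleC 1 x = x"
    and norm_scaleC: "norm (scaleC a x) = cmod a * norm x"
    and scaleC_left_mult: "scaleC a x * y = scaleC a (x * y)"

definition quasinilpotent :: "'a::real_normed_algebra_1 \<Rightarrow> bool" where
  "quasinilpotent x \<longleftrightarrow> (\<lambda>n. norm (x ^ n) powr (1 / real n)) \<longlonglongrightarrow> 0"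

end

theory Submission
  imports Defs "HOL-Analysis.Analysis"
begin

definition qn :: "'a::real_normed_algebra_1 \<Rightarrow> bool" where
  "qn q \<longleftrightarrow> (\<forall>e>0. \<exists>M. \<forall>n. norm (q^n) \<le> M * e^n)"

lemma qn_M_ge1:
  assumes "\<forall>n. norm ((q::'a::real_normed_algebra_1)^n) \<le> M * e^n" shows "M \<ge> 1"
  using assms[rule_format, of 0] by simp

lemma qn_of_quasinilpotent:
  fixes q :: "'a::real_normed_algebra_1"
  assumes "quasinilpotent q" shows "qn q"
  unfolding qn_def
proof (intro allI impI)
  fix e :: real assume e: "e > 0"
  have "eventually (\<lambda>n. norm (q ^ n) powr (1 / real n) < e) sequentially"
    using assms e unfolding quasinilpotent_def by (intro order_tendstoD) auto
  then obtain N where N: "\<And>n. n \<ge> N \<Longrightarrow> norm (q ^ n) powr (1 / real n) < e"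
    unfolding eventually_sequentially by blast
  define N' where "N' = max N 1"
  have big: "norm (q^n) \<le> e^n" if "n \<ge> N'" for n
  proof (cases "norm (q^n) = 0")
    case True then show ?thesis using e by simp
  next
    case False
    then have pos: "norm (q^n) > 0" by simp
    have n1: "n \<ge> 1" "n \<ge> N" using that by (auto simp: N'_def)
    have "norm (q^n) = (norm (q^n) powr (1 / real n)) powr (real n)"
      using pos n1 by (simp add: powr_powr)
    also have "\<dots> = (norm (q^n) powr (1 / real n)) ^ n"
      using pos by (simp add: powr_realpow)
    also have "\<dots> \<le> e ^ n"
      using N[OF n1(2)] by (intro power_mono) auto
    finally show ?thesis .
  qed
  define M where "M = (\<Sum>k<N'. norm (q^k) / e^k) + 1"
  have "0 \<le> (\<Sum>k<N'. norm (q^k) / e^k)" using e by (intro sum_nonneg) auto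
  then have M1: "M \<ge> 1" unfolding M_def by simp
  show "\<exists>M. \<forall>n. norm (q^n) \<le> M * e^n"
  proof (intro exI allI)
    fix n
    show "norm (q^n) \<le> M * e^n"
    proof (cases "n < N'")
      case True
      have "norm (q^n) / e^n \<le> (\<Sum>k<N'. norm (q^k) / e^k)"
        using True e by (intro member_le_sum) auto
      also have "\<dots> \<le> M" unfolding M_def by simp
      finally show ?thesis using e by (simp add: divide_le_eq)
    next
      case False
      then have "norm (q^n) \<le> e^n" using big by simp
      also have "\<dots> \<le> M * e^n" using M1 e by simp
      finally show ?thesis .
    qed
  qed
qed

lemma qn_add:
  fixes a b :: "'a::{real_normed_algebra_1, comm_ring_1}"
  assumes "qn a" "qn b" shows "qn (a + b)"
  unfolding qn_def
proof (intro allI impI)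
  fix e :: real assume e: "e > 0"
  obtain M1 where M1: "\<forall>n. norm (a^n) \<le> M1 * (e/2)^n" using assms(1) e unfolding qn_def
    by (meson half_gt_zero)
  obtain M2 where M2: "\<forall>n. norm (b^n) \<le> M2 * (e/2)^n" using assms(2) e unfolding qn_def
    by (meson half_gt_zero)
  have M1p: "M1 \<ge> 0" using qn_M_ge1[OF M1] by simp
  have M2p: "M2 \<ge> 0" using qn_M_ge1[OF M2] by simp
  show "\<exists>M. \<forall>n. norm ((a+b)^n) \<le> M * e^n"
  proof (intro exI allI)
    fix n
    have "norm ((a+b)^n) = norm (\<Sum>k\<le>n. of_nat (n choose k) * a^k * b^(n-k))"
      by (simp add: binomial_ring)
    also have "\<dots> \<le> (\<Sum>k\<le>n. norm (of_nat (n choose k) * a^k * b^(n-k)))"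
      by (rule norm_sum)
    also have "\<dots> \<le> (\<Sum>k\<le>n. real (n choose k) * (M1 * (e/2)^k) * (M2 * (e/2)^(n-k)))"
    proof (intro sum_mono)
      fix k
      have "norm (of_nat (n choose k) * a^k * b^(n-k)) \<le> norm (of_nat (n choose k) * a^k :: 'a) * norm (b^(n-k))"
        by (rule norm_mult_ineq)
      also have "\<dots> \<le> (real (n choose k) * norm (a^k)) * norm (b^(n-k))"
        by (intro mult_right_mono) (auto intro: order_trans[OF norm_mult_ineq] simp: norm_of_nat)
      also have "\<dots> \<le> real (n choose k) * (M1 * (e/2)^k) * (M2 * (e/2)^(n-k))"
        using M1 M2 M1p M2p e by (intro mult_mono mult_left_mono) auto
      finally show "norm (of_nat (n choose k) * a^k * b^(n-k)) \<le> real (n choose k) * (M1 * (e/2)^k) * (M2 * (e/2)^(n-k))" .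
    qed
    also have "\<dots> = M1 * M2 * (\<Sum>k\<le>n. real (n choose k) * (e/2)^k * (e/2)^(n-k))"
      by (simp add: sum_distrib_left algebra_simps)
    also have "(\<Sum>k\<le>n. real (n choose k) * (e/2)^k * (e/2)^(n-k)) = (e/2 + e/2)^n"
      by (rule binomial_ring[symmetric])
    also have "(e/2 + e/2) = e" by simp
    finally show "norm ((a+b)^n) \<le> M1 * M2 * e^n" .
  qed
qed

lemma qn_mult:
  fixes q z :: "'a::{real_normed_algebra_1, comm_ring_1}"
  assumes "qn q" shows "qn (z * q)"
  unfolding qn_def
proof (intro allI impI)
  fix e :: real assume e: "e > 0"
  define e' where "e' = e / (norm z + 1)"
  have e': "e' > 0" unfolding e'_def using e by (smt (verit) norm_ge_zero divide_pos_pos)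
  obtain M where M: "\<forall>n. norm (q^n) \<le> M * e'^n" using assms e' unfolding qn_def by blast
  have Mp: "M \<ge> 0" using qn_M_ge1[OF M] by simp
  have "norm z / (norm z + 1) \<le> 1" by (smt (verit) norm_ge_zero divide_le_eq_1)
  have ze0: "norm z * e' = e * (norm z / (norm z + 1))" by (simp add: e'_def)
  have ze: "norm z * e' \<le> e"
    unfolding ze0 using e mult_left_mono[of "norm z / (norm z + 1)" 1 e] \<open>norm z / (norm z + 1) \<le> 1\<close> by simp
  show "\<exists>M. \<forall>n. norm ((z*q)^n) \<le> M * e^n"
  proof (intro exI allI)
    fix n
    have "norm ((z*q)^n) = norm (z^n * q^n)" by (simp add: power_mult_distrib)
    also have "\<dots> \<le> norm (z^n) * norm (q^n)" by (rule norm_mult_ineq)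
    also have "\<dots> \<le> norm z ^ n * (M * e'^n)"
      using M by (intro mult_mono norm_power_ineq) auto
    also have "\<dots> = M * (norm z * e')^n" by (simp add: power_mult_distrib)
    also have "\<dots> \<le> M * e^n"
      using ze e' Mp by (intro mult_left_mono power_mono) auto
    finally show "norm ((z*q)^n) \<le> M * e^n" .
  qed
qed

lemma qn_neumann:
  fixes q :: "'a::{real_normed_algebra_1, comm_ring_1, banach}"
  assumes "qn q" shows "\<exists>h. (1 + q) * h = 1"
proof -
  define p where "p = - q"
  obtain M where M: "\<forall>n. norm (q^n) \<le> M * (1/2)^n" using assms unfolding qn_def
    by (meson zero_less_divide_1_iff zero_less_numeral)
  have Mp: "M \<ge> 0" using qn_M_ge1[OF M] by simp
  have np: "norm (p^n) \<le> M * (1/2)^n" for n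
  proof -
    have "norm (p^n) = norm (q^n)" unfolding p_def by (cases "even n") simp_all
    then show ?thesis using M by simp
  qed
  have geo: "summable (\<lambda>n. M * (1/2::real)^n)" by (intro summable_mult complete_algebra_summable_geometric) simp
  have sp: "summable (\<lambda>n. p^n)"
    apply (rule summable_norm_cancel)
    apply (rule summable_norm_comparison_test[where g="\<lambda>n. M * (1/2)^n"])
    using np geo by auto
  have "(\<lambda>n. M * (1/2::real)^n) \<longlonglongrightarrow> 0"
    by (rule tendsto_mult_right_zero, rule LIMSEQ_power_zero) simp
  then have "(\<lambda>n. p^n) \<longlonglongrightarrow> 0"
    by (rule Lim_null_comparison[OF always_eventually, rotated]) (use np in auto)
  then have "(\<lambda>n. p^n - p^(Suc n)) sums (p^0 - 0)"
    by (rule telescope_sums')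
  moreover have "(\<lambda>n. (1 - p) * p^n) sums ((1 - p) * suminf (\<lambda>n. p^n))"
    using sp by (intro bounded_linear.sums[OF bounded_linear_mult_right] summable_sums)
  moreover have "(\<lambda>n. (1 - p) * p^n) = (\<lambda>n. p^n - p^(Suc n))"
    by (simp add: algebra_simps)
  ultimately have "(1 - p) * suminf (\<lambda>n. p^n) = 1"
    using sums_unique2 by fastforce
  then show ?thesis unfolding p_def by auto
qed

definition cL :: "complex \<Rightarrow> 'a::comm_cbanach_algebra_1" where "cL c = scaleC c 1"

lemma scaleC_zero_left: "scaleC 0 (x::'a::comm_cbanach_algebra_1) = 0"
  using scaleC_of_real[of 0 x] by simp
lemma scaleC_eq: "scaleC c (x::'a::comm_cbanach_algebra_1) = cL c * x"
  unfolding cL_def using scaleC_left_mult[of c 1 x] by simp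
lemma cL_mult: "cL c * cL d = (cL (c*d) :: 'a::comm_cbanach_algebra_1)"
  unfolding cL_def by (simp add: scaleC_left_mult scaleC_scaleC)
lemma cL_add: "cL (c + d) = (cL c + cL d :: 'a::comm_cbanach_algebra_1)"
  unfolding cL_def by (simp add: scaleC_add_left)
lemma cL_0: "cL 0 = (0 :: 'a::comm_cbanach_algebra_1)"
  unfolding cL_def by (simp add: scaleC_zero_left)
lemma cL_1: "cL 1 = (1 :: 'a::comm_cbanach_algebra_1)"
  unfolding cL_def by (simp add: scaleC_one)
lemma cL_minus: "cL (- c) = (- cL c :: 'a::comm_cbanach_algebra_1)"
proof -
  have "cL c + cL (-c) = (0::'a)" using cL_add[of c "-c", where 'a='a] by (simp add: cL_0)
  then show ?thesis by (metis add.commute eq_neg_iff_add_eq_0)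
qed
lemma cL_diff: "cL (c - d) = (cL c - cL d :: 'a::comm_cbanach_algebra_1)"
  using cL_add[of c "-d", where 'a='a] by (simp add: cL_minus)
lemma cL_of_real: "cL (of_real r) = (of_real r :: 'a::comm_cbanach_algebra_1)"
  unfolding cL_def scaleC_of_real by (simp add: of_real_def)
lemma cL_power: "cL c ^ n = (cL (c ^ n) :: 'a::comm_cbanach_algebra_1)"
  by (induction n) (simp_all add: cL_1 cL_mult mult.commute)
lemma cL_inv: "c \<noteq> 0 \<Longrightarrow> cL c * cL (inverse c) = (1 :: 'a::comm_cbanach_algebra_1)"
  by (simp add: cL_mult cL_1)
lemma cL_scaleR: "cL (r *\<^sub>R c) = (r *\<^sub>R cL c :: 'a::comm_cbanach_algebra_1)"
  by (simp add: scaleR_conv_of_real cL_mult[symmetric] cL_of_real)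
lemma bounded_linear_cL: "bounded_linear (cL :: complex \<Rightarrow> 'a::comm_cbanach_algebra_1)"
proof (rule bounded_linear_intro[where K = "norm (1::'a)"])
  fix c :: complex show "norm (cL c :: 'a) \<le> norm c * norm (1::'a)"
    unfolding cL_def by (simp add: norm_scaleC)
qed (simp_all add: cL_add cL_scaleR)

lemma exp_cL: "exp (cL c) = (cL (exp c) :: 'a::comm_cbanach_algebra_1)"
proof -
  have "(\<lambda>n. cL (c^n /\<^sub>R fact n) :: 'a) sums cL (exp c)"
    by (rule bounded_linear.sums[OF bounded_linear_cL exp_converges])
  moreover have "(\<lambda>n. cL (c^n /\<^sub>R fact n) :: 'a) = (\<lambda>n. (cL c)^n /\<^sub>R fact n)"
    by (simp add: cL_scaleR cL_power)
  ultimately show ?thesis using exp_converges sums_unique2 by metis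
qed

lemma scalar_cos: "(\<i>^n + (-\<i>)^n) / of_real (fact n) = complex_of_real (2 * cos_coeff n)"
proof (cases "even n")
  case True
  then obtain m where m: "n = 2*m" by (auto elim: evenE)
  have "\<i>^n = (-1)^m" "(-\<i>)^n = (-1)^m" unfolding m by (simp_all add: power_mult)
  then show ?thesis using True by (simp add: cos_coeff_def m)
next
  case False
  then show ?thesis by (simp add: cos_coeff_def)
qed

lemma cos_exp: "2 * cos z = exp (cL \<i> * z) + exp (-(cL \<i> * z)) "
  for z :: "'a::comm_cbanach_algebra_1"
proof -
  have "(\<lambda>n. (cL \<i> * z)^n /\<^sub>R fact n + (-(cL \<i> * z))^n /\<^sub>R fact n) sums
        (exp (cL \<i> * z) + exp (-(cL \<i> * z)))"
    by (intro sums_add exp_converges)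
  moreover have "(\<lambda>n. (cL \<i> * z)^n /\<^sub>R fact n + (-(cL \<i> * z))^n /\<^sub>R fact n) =
        (\<lambda>n. 2 * (cos_coeff n *\<^sub>R z^n))"
  proof
    fix n
    have m: "-(cL \<i> * z) = cL (-\<i>) * z" by (simp add: cL_minus)
    have "(cL \<i> * z)^n /\<^sub>R fact n + (-(cL \<i> * z))^n /\<^sub>R fact n
        = cL ((\<i>^n + (-\<i>)^n) / of_real (fact n)) * z^n"
      unfolding m by (simp add: power_mult_distrib cL_power scaleR_conv_of_real
            cL_of_real[symmetric] cL_mult cL_add divide_inverse algebra_simps flip: of_real_inverse)
        (simp add: of_real_inverse mult.commute)
    also have "\<dots> = 2 * (cos_coeff n *\<^sub>R z^n)"
      unfolding scalar_cos cL_of_real by (simp add: scaleR_conv_of_real)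
    finally show "(cL \<i> * z)^n /\<^sub>R fact n + (-(cL \<i> * z))^n /\<^sub>R fact n = 2 * (cos_coeff n *\<^sub>R z^n)" .
  qed
  moreover have "(\<lambda>n. 2 * (cos_coeff n *\<^sub>R z^n)) sums (2 * cos z)"
    by (intro sums_mult cos_converges)
  ultimately show ?thesis using sums_unique2 by metis
qed

lemma series_shift:
  fixes u :: "'a::{real_normed_algebra_1, banach}"
  assumes "(\<lambda>n. c n *\<^sub>R u^n) sums s" "summable (\<lambda>n. c (Suc n) *\<^sub>R u^n)"
  shows "s = c 0 *\<^sub>R 1 + u * (\<Sum>n. c (Suc n) *\<^sub>R u^n)"
proof -
  have "(\<lambda>n. c (Suc n) *\<^sub>R u^(Suc n)) sums (s - c 0 *\<^sub>R 1)"
    using assms(1) sums_Suc_iff[of "\<lambda>n. c n *\<^sub>R u^n" "s - c 0 *\<^sub>R 1"] by simp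
  moreover have "(\<lambda>n. u * (c (Suc n) *\<^sub>R u^n)) sums (u * (\<Sum>n. c (Suc n) *\<^sub>R u^n))"
    using assms(2) by (intro bounded_linear.sums[OF bounded_linear_mult_right] summable_sums)
  moreover have "(\<lambda>n. u * (c (Suc n) *\<^sub>R u^n)) = (\<lambda>n. c (Suc n) *\<^sub>R u^(Suc n))"
    by (simp add: mult_scaleR_right)
  ultimately have "s - c 0 *\<^sub>R 1 = u * (\<Sum>n. c (Suc n) *\<^sub>R u^n)"
    using sums_unique2 by metis
  then show ?thesis by (simp add: algebra_simps)
qed

lemma summable_fact_bound:
  fixes u :: "'a::{real_normed_algebra_1, banach}"
  assumes "\<And>n. \<bar>c n\<bar> \<le> inverse (fact n)"
  shows "summable (\<lambda>n. c n *\<^sub>R u^n)"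
proof (rule summable_norm_cancel, rule summable_norm_comparison_test[OF exI, rule_format])
  show "summable (\<lambda>n. norm (u^n /\<^sub>R fact n))" by (rule summable_norm_exp)
  fix n :: nat
  have "norm (c n *\<^sub>R u^n) = \<bar>c n\<bar> * norm (u^n)" by simp
  also have "\<dots> \<le> inverse (fact n) * norm (u^n)"
    using assms by (intro mult_right_mono) auto
  also have "\<dots> = norm (u^n /\<^sub>R fact n)" by simp
  finally show "norm (c n *\<^sub>R u^n) \<le> norm (u^n /\<^sub>R fact n)" .
qed

lemma exp_factor:
  fixes u :: "'a::{real_normed_algebra_1, comm_ring_1, banach}"
  assumes "qn u"
  shows "\<exists>g. exp u - 1 = u * g \<and> (\<exists>h. g * h = 1)"
proof -
  define g where "g = (\<Sum>n. inverse (fact (Suc n)) *\<^sub>R u^n)"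
  define g2 where "g2 = (\<Sum>n. inverse (fact (Suc (Suc n))) *\<^sub>R u^n)"
  have b1: "\<bar>inverse (fact (Suc n)) :: real\<bar> \<le> inverse (fact n)" for n
  proof -
    have "fact n \<le> (fact (Suc n) :: real)" by (rule fact_mono) simp
    have "0 < (fact n :: real)" by simp
    from le_imp_inverse_le[OF \<open>fact n \<le> _\<close> this] have "inverse (fact (Suc n) :: real) \<le> inverse (fact n)" .
    moreover have "0 \<le> inverse (fact (Suc n) :: real)" by simp
    ultimately show ?thesis by (metis abs_of_nonneg)
  qed
  have b2: "\<bar>inverse (fact (Suc (Suc n))) :: real\<bar> \<le> inverse (fact n)" for n
  proof -
    have "fact n \<le> (fact (Suc (Suc n)) :: real)" by (rule fact_mono) simp
    have "0 < (fact n :: real)" by simp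
    from le_imp_inverse_le[OF \<open>fact n \<le> _\<close> this] have "inverse (fact (Suc (Suc n)) :: real) \<le> inverse (fact n)" .
    moreover have "0 \<le> inverse (fact (Suc (Suc n)) :: real)" by simp
    ultimately show ?thesis by (metis abs_of_nonneg)
  qed
  have "exp u = inverse (fact 0) *\<^sub>R 1 + u * g"
    unfolding g_def
    by (rule series_shift[where c = "\<lambda>n. inverse (fact n)"])
       (use exp_converges[of u] summable_fact_bound[OF b1] in auto)
  then have e1: "exp u - 1 = u * g" by simp
  have "(\<lambda>n. inverse (fact (Suc n)) *\<^sub>R u^n) sums g"
    unfolding g_def by (rule summable_sums, rule summable_fact_bound[OF b1])
  then have "g = inverse (fact (Suc 0)) *\<^sub>R 1 + u * g2"
    unfolding g2_def
    by (rule series_shift[where c = "\<lambda>n. inverse (fact (Suc n))"])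
       (use summable_fact_bound[OF b2] in auto)
  then have "g = 1 + g2 * u" by (simp add: mult.commute)
  moreover have "\<exists>h. (1 + g2 * u) * h = 1"
    by (rule qn_neumann, rule qn_mult, rule assms)
  ultimately show ?thesis using e1 by auto
qed

lemma cancel_inv:
  fixes a b :: "'a::comm_ring_1"
  assumes "a * b = 0" "b * h = 1" shows "a = 0"
proof -
  have "a = a * (b * h)" using assms(2) by simp
  also have "\<dots> = 0" using assms(1) by (simp add: mult.assoc[symmetric])
  finally show ?thesis .
qed

lemma key_identity:
  fixes C C' X X' Y Y' :: "'a::comm_ring_1"
  assumes "C*C' = 1" "X*X' = 1" "Y*Y' = 1" "C*X + C'*X' = C*Y + C'*Y'"
  shows "(X - Y) * (C*C*X*Y - 1) = 0"
proof -
  have "(X - Y) * (C*C*X*Y - 1) = C*X*Y*(C*X + C'*X') - C*X*Y*(C*Y + C'*Y') - X + Y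
      - (C*C')*(X*X')*Y + (C*C')*X*(Y*Y')"
    by (simp add: algebra_simps)
  also have "\<dots> = 0" using assms by simp
  finally show ?thesis .
qed

lemma scalar_case:
  fixes l :: complex
  assumes "exp (\<i> * l) * exp (\<i> * l) = 1"
  shows "\<exists>k::int. l = of_int k * complex_of_real pi"
proof -
  have "exp (2 * \<i> * l) = exp (\<i> * l + \<i> * l)" by (simp add: algebra_simps)
  also have "\<dots> = 1" unfolding exp_add by (rule assms)
  finally have "exp (2 * \<i> * l) = 1" .
  then obtain n :: int where "Re (2 * \<i> * l) = 0" "Im (2 * \<i> * l) = of_int (2 * n) * pi"
    unfolding exp_eq_1 by blast
  then have "Im l = 0" "Re l = of_int n * pi" by simp_all
  then have "l = of_int n * complex_of_real pi" by (simp add: complex_eq_iff)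
  then show ?thesis by blast
qed

lemma scalar_case2:
  fixes l :: complex
  assumes "\<exists>k::int. l = of_int k * complex_of_real pi"
  shows "exp (\<i> * l) * exp (\<i> * l) = 1"
proof -
  obtain k :: int where k: "l = of_int k * complex_of_real pi" using assms by blast
  have "exp (\<i> * l) * exp (\<i> * l) = exp (\<i> * l + \<i> * l)" by (rule exp_add[symmetric])
  also have "\<dots> = exp (2 * \<i> * l)" by (simp add: algebra_simps)
  also have "\<dots> = 1" unfolding exp_eq_1 k by (intro conjI exI[of _ k]) simp_all
  finally show ?thesis .
qed



lemma inv_mult:
  fixes a b :: "'a::comm_ring_1"
  assumes "a * h1 = 1" "b * h2 = 1" shows "(a * b) * (h1 * h2) = 1"
proof -
  have "(a * b) * (h1 * h2) = (a * h1) * (b * h2)" by (simp add: ac_simps)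
  then show ?thesis using assms by simp
qed

lemma core:
  fixes x y :: "'a::comm_cbanach_algebra_1" and l :: complex
  assumes qx: "qn x" and qy: "qn y"
    and hyp: "cos (scaleC l 1 + x) = cos (scaleC l 1 + y)"
  defines "u \<equiv> cL \<i> * (x - y)" and "v \<equiv> cL \<i> * (x + y)"
  obtains gu gv h hv where "gu * h = 1" "gv * hv = 1" "exp (cL \<i> * y) * u * gu * (cL (exp (\<i> * l) * exp (\<i> * l)) * (1 + v * gv) - 1) = 0"
     "exp v = 1 + v * gv" "qn v" "qn u"
proof -
  let ?I = "cL \<i> :: 'a"
  have qxy: "qn (x + (-1) * y)" by (rule qn_add[OF qx qn_mult[OF qy]])
  have qu: "qn u" unfolding u_def using qn_mult[OF qxy, of ?I] by simp
  have qv: "qn v" unfolding v_def by (rule qn_mult[OF qn_add[OF qx qy]])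
  obtain gu where gu: "exp u - 1 = u * gu" "\<exists>h. gu * h = 1" using exp_factor[OF qu] by blast
  obtain gv hv where gv: "exp v - 1 = v * gv" and hv: "gv * hv = 1" using exp_factor[OF qv] by blast
  obtain h where h: "gu * h = 1" using gu(2) by blast
  define c where "c = exp (\<i> * l)"
  define C where "C = (cL c :: 'a)"
  define C' where "C' = (cL (exp (- (\<i> * l))) :: 'a)"
  define X where "X = exp (?I * x)"
  define X' where "X' = exp (- (?I * x))"
  define Y where "Y = exp (?I * y)"
  define Y' where "Y' = exp (- (?I * y))"
  have CC': "C * C' = 1" unfolding C_def C'_def c_def cL_mult exp_minus_inverse cL_1 by (rule refl)
  have XX': "X * X' = 1" unfolding X_def X'_def by (rule exp_minus_inverse)
  have YY': "Y * Y' = 1" unfolding Y_def Y'_def by (rule exp_minus_inverse)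
  have sp1: "exp (?I * (cL l + w)) = C * exp (?I * w)" for w
  proof -
    have "?I * (cL l + w) = cL (\<i> * l) + ?I * w" by (simp add: distrib_left cL_mult)
    then show ?thesis by (simp add: exp_add_commuting mult.commute exp_cL C_def c_def)
  qed
  have sp2: "exp (- (?I * (cL l + w))) = C' * exp (- (?I * w))" for w
  proof -
    have e1: "- (?I * (cL l + w)) = cL (- (\<i> * l)) + - (?I * w)" by (simp add: distrib_left cL_mult cL_minus)
    have e2: "exp (cL (- (\<i> * l)) + - (?I * w)) = exp (cL (- (\<i> * l))) * exp (- (?I * w))"
      by (rule exp_add_commuting) (simp add: mult.commute)
    show ?thesis unfolding e1 e2 exp_cL C'_def by (rule refl)
  qed
  have "2 * cos (cL l + x) = 2 * cos (cL l + y)" using hyp by (simp add: cL_def)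
  then have "C * X + C' * X' = C * Y + C' * Y'"
    unfolding cos_exp sp1 sp2 X_def X'_def Y_def Y'_def .
  then have key: "(X - Y) * (C*C*X*Y - 1) = 0" by (rule key_identity[OF CC' XX' YY'])
  have "?I * x = ?I * y + u" unfolding u_def by (simp add: algebra_simps)
  then have "X = Y * exp u" unfolding X_def Y_def by (simp add: exp_add_commuting mult.commute)
  then have XY1: "X - Y = Y * (u * gu)" using gu(1) by (simp add: algebra_simps)
  have "X * Y = exp v" unfolding X_def Y_def v_def by (simp add: exp_add_commuting mult.commute distrib_left)
  then have XY: "X * Y = exp v" .
  have ev: "exp v = 1 + v * gv" using gv by (metis add.commute diff_add_cancel)
  have "C*C*X*Y = (C*C)*(X*Y)" by (simp add: mult.assoc)
  also have "\<dots> = cL (c * c) * (1 + v * gv)" unfolding XY ev C_def cL_mult by (rule refl)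
  finally have XY2: "C*C*X*Y = cL (c * c) * (1 + v * gv)" .
  have "exp (cL \<i> * y) * u * gu * (cL (exp (\<i> * l) * exp (\<i> * l)) * (1 + v * gv) - 1) = 0"
    using key unfolding XY1 XY2 by (simp add: Y_def c_def ac_simps)
  moreover note ev
  ultimately show ?thesis using that h hv qu qv by blast
qed

theorem lemma2p2:
  fixes x y :: "'a::comm_cbanach_algebra_1" and l :: complex
  assumes "quasinilpotent x" and "quasinilpotent y"
  shows "((\<nexists>k::int. l = of_int k * complex_of_real pi) \<and>
            cos (scaleC l 1 + x) = cos (scaleC l 1 + y) \<longrightarrow> x = y)
       \<and> ((\<exists>k::int. l = of_int k * complex_of_real pi) \<and>
            cos (scaleC l 1 + x) = cos (scaleC l 1 + y) \<longrightarrow> x ^ 2 = y ^ 2)"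
proof -
  let ?I = "cL \<i> :: 'a"
  have qx: "qn x" and qy: "qn y" using assms by (simp_all add: qn_of_quasinilpotent)
  have II: "?I * ?I = -1" by (simp add: cL_mult cL_minus cL_1)
  have EY: "exp (?I * y) * exp (- (?I * y)) = 1" by (rule exp_minus_inverse)
  define u where "u = ?I * (x - y)"
  define v where "v = ?I * (x + y)"
  show ?thesis
  proof (intro conjI impI; elim conjE)
    assume nk: "\<nexists>k::int. l = of_int k * complex_of_real pi"
      and hyp: "cos (scaleC l 1 + x) = cos (scaleC l 1 + y)"
    obtain gu gv h hv where h: "gu * h = 1"
      and eq: "exp (?I * y) * u * gu * (cL (exp (\<i> * l) * exp (\<i> * l)) * (1 + v * gv) - 1) = 0"
      and qv: "qn v"
      using core[OF qx qy hyp] unfolding u_def v_def by blast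
    define d where "d = exp (\<i> * l) * exp (\<i> * l)"
    have d1: "d - 1 \<noteq> 0" using scalar_case nk unfolding d_def by auto
    have W: "cL d * (1 + v * gv) - 1 = cL (d - 1) * (1 + cL (d / (d - 1)) * (gv * v))"
    proof -
      have "cL (d - 1) * cL (d / (d - 1)) = (cL d :: 'a)" using d1 by (simp add: cL_mult)
      then have "cL (d - 1) * (1 + cL (d / (d - 1)) * (gv * v)) = cL (d - 1) + cL d * (gv * v)"
        by (simp add: distrib_left mult.assoc[symmetric])
      then show ?thesis by (simp add: cL_diff cL_1 algebra_simps)
    qed
    obtain h2 where h2: "(1 + cL (d / (d - 1)) * (gv * v)) * h2 = (1::'a)"
      using qn_neumann[OF qn_mult[OF qn_mult[OF qv]]] by blast
    have Winv: "(cL d * (1 + v * gv) - 1) * (cL (inverse (d - 1)) * h2) = 1"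
      unfolding W using inv_mult[OF cL_inv[OF d1] h2] .
    have "exp (?I * y) * u * gu = 0"
      using cancel_inv[OF _ Winv] eq unfolding d_def by blast
    then have "(u * exp (?I * y)) * gu = 0" by (simp add: ac_simps)
    then have "u * exp (?I * y) = 0" using cancel_inv h by blast
    then have "u = 0" using cancel_inv EY by blast
    then have "- (?I * u) = 0" by simp
    moreover have "- (?I * u) = x - y" unfolding u_def
      by (simp add: mult.assoc[symmetric] II)
    ultimately show "x = y" by simp
  next
    assume k: "\<exists>k::int. l = of_int k * complex_of_real pi"
      and hyp: "cos (scaleC l 1 + x) = cos (scaleC l 1 + y)"
    obtain gu gv h hv where h: "gu * h = 1" and hv: "gv * hv = 1"
      and eq: "exp (?I * y) * u * gu * (cL (exp (\<i> * l) * exp (\<i> * l)) * (1 + v * gv) - 1) = 0"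
      using core[OF qx qy hyp] unfolding u_def v_def by blast
    have d: "exp (\<i> * l) * exp (\<i> * l) = 1" by (rule scalar_case2[OF k])
    have "(u * v) * ((gu * gv) * exp (?I * y)) = 0"
      using eq unfolding d by (simp add: cL_1 ac_simps)
    moreover have "((gu * gv) * exp (?I * y)) * ((h * hv) * exp (- (?I * y))) = 1"
      by (rule inv_mult[OF inv_mult[OF h hv] EY])
    ultimately have "u * v = 0" by (rule cancel_inv)
    moreover have "u * v = - (x^2 - y^2)" unfolding u_def v_def
    proof -
      have "?I * (x - y) * (?I * (x + y)) = (?I * ?I) * ((x - y) * (x + y))" by (simp add: ac_simps)
      also have "\<dots> = - (x^2 - y^2)" unfolding II by (simp add: algebra_simps power2_eq_square)
      finally show "?I * (x - y) * (?I * (x + y)) = - (x^2 - y^2)" .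
    qed
    ultimately show "x^2 = y^2" by simp
  qed
qed

end
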